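(* Let $n\ge2$ be an integer and let $\mathfrak{R}$ be a unital alternative ring which is $2$-, $3$-, $(n-1)$- and $(n-3)$-torsion free, with a nontrivial idempotent $e_1$, $e_2=1-e_1$, and Peirce decomposition $\mathfrak{R}=\mathfrak{R}_{11}\oplus\mathfrak{R}_{12}\oplus\mathfrak{R}_{21}\oplus\mathfrak{R}_{22}$, satisfying: (1) if $i\ne j$, $x_{ij}\in\mathfrak{R}_{ij}$ and $x_{ij}\mathfrak{R}_{ji}=0$, then $x_{ij}=0$; (2) if $x_{11}\in\mathfrak{R}_{11}$ and $x_{11}\mathfrak{R}_{12}=0$ or $\mathfrak{R}_{21}x_{11}=0$, then $x_{11}=0$; (3) if $x_{22}\in\mathfrak{R}_{22}$ and $\mathfrak{R}_{12}x_{22}=0$ or $x_{22}\mathfrak{R}_{21}=0$, then $x_{22}=0$; (4) if $z\in\mathcal{Z}(\mathfrak{R})$, $z\ne0$, then $z\mathfrak{R}=\mathfrak{R}$. Let $\mathcal{D}\colon\mathfrak{R}\to\mathfrak{R}$ be a multiplicative Lie $n$-derivation satisfying (a) $e_2\mathcal{D}(\mathfrak{R}_{11})e_2\subseteq\mathcal{Z}(\mathfrak{R})e_2$, (b) $e_1\mathcal{D}(\mathfrak{R}_{22})e_1\subseteq\mathcal{Z}(\mathfrak{R})e_1$, (c) $\mathcal{D}(\mathfrak{R}_{ij})\subseteq\mathfrak{R}_{ij}$ for $i\ne j$. Put $y=e_1\mathcal{D}(e_1)e_2+e_2\mathcal{D}(e_1)e_1$, $z=e_1$, and $f_{y,z}=[L_y,L_z]+[L_y,R_z]+[R_y,R_z]$.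 Then $\mathcal{D}(e_1)-f_{y,z}(e_1)\in\mathcal{Z}(\mathfrak{R})$.
   Context: $\mathfrak{R}$ is alternative if $(x,x,y)=0=(y,x,x)$ for all $x,y$, where $(x,y,z)=(xy)z-x(yz)$ (not necessarily associative). $k$-torsion free: $kx=0\Rightarrow x=0$. $[x,y]=xy-yx$; $\mathcal{Z}(\mathfrak{R})=\{r:[r,x]=0\ \forall x\}$; $\mathcal{Z}(\mathfrak{R})e_i=\{ze_i:z\in\mathcal{Z}(\mathfrak{R})\}$. $p_1(x)=x$, $p_n(x_1,\dots,x_n)=[p_{n-1}(x_1,\dots,x_{n-1}),x_n]$; a (not necessarily additive) map $\mathcal{D}$ is a multiplicative Lie $n$-derivation if $\mathcal{D}(p_n(x_1,\dots,x_n))=\sum_{i=1}^n p_n(x_1,\dots,\mathcal{D}(x_i),\dots,x_n)$ for all $x_i$. $\mathfrak{R}_{ij}=e_i\mathfrak{R}e_j$. $L_y(x)=yx$, $R_y(x)=xy$ are the left and right multiplication operators, and $[S,T]=S\circ T-T\circ S$ for operators $S,T$ on $\mathfrak{R}$. *)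

theory Defs
  imports Main
begin

text \<open>A (not necessarily associative) ring is modelled by an additive abelian group
  type together with an explicit multiplication function.\<close>

definition assoc3 :: "('a::ab_group_add \<Rightarrow> 'a \<Rightarrow> 'a) \<Rightarrow> 'a \<Rightarrow> 'a \<Rightarrow> 'a \<Rightarrow> 'a" where
  "assoc3 mult x y z = mult (mult x y) z - mult x (mult y z)"

definition unital_alternative_ring :: "('a::ab_group_add \<Rightarrow> 'a \<Rightarrow> 'a) \<Rightarrow> 'a \<Rightarrow> bool" where
  "unital_alternative_ring mult one \<longleftrightarrow>
     (\<forall>x y z. mult x (y + z) = mult x y + mult x z) \<and>
     (\<forall>x y z. mult (x + y) z = mult x z + mult y z) \<and>
     (\<forall>x. mult one x = x \<and> mult x one = x) \<and>
     (\<forall>x y. assoc3 mult x x y = 0 \<and> assoc3 mult y x x = 0)"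

fun nsm :: "nat \<Rightarrow> 'a::ab_group_add \<Rightarrow> 'a" where
  "nsm 0 x = 0"
| "nsm (Suc k) x = x + nsm k x"

definition zsm :: "int \<Rightarrow> 'a::ab_group_add \<Rightarrow> 'a" where
  "zsm k x = (if 0 \<le> k then nsm (nat k) x else - nsm (nat (- k)) x)"

definition torsion_free :: "int \<Rightarrow> 'a::ab_group_add itself \<Rightarrow> bool" where
  "torsion_free k _ \<longleftrightarrow> (\<forall>x::'a. zsm k x = 0 \<longrightarrow> x = 0)"

definition lie_br :: "('a::ab_group_add \<Rightarrow> 'a \<Rightarrow> 'a) \<Rightarrow> 'a \<Rightarrow> 'a \<Rightarrow> 'a" where
  "lie_br mult x y = mult x y - mult y x"

definition center :: "('a::ab_group_add \<Rightarrow> 'a \<Rightarrow> 'a) \<Rightarrow> 'a set" where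
  "center mult = {r. \<forall>x. lie_br mult r x = 0}"

fun lie_p :: "('a::ab_group_add \<Rightarrow> 'a \<Rightarrow> 'a) \<Rightarrow> 'a list \<Rightarrow> 'a" where
  "lie_p mult [] = 0"
| "lie_p mult (x # xs) = foldl (lie_br mult) x xs"

definition mult_lie_n_derivation ::
    "('a::ab_group_add \<Rightarrow> 'a \<Rightarrow> 'a) \<Rightarrow> nat \<Rightarrow> ('a \<Rightarrow> 'a) \<Rightarrow> bool" where
  "mult_lie_n_derivation mult n D \<longleftrightarrow>
     (\<forall>xs. length xs = n \<longrightarrow>
        D (lie_p mult xs) = (\<Sum>i<n. lie_p mult (xs[i := D (xs ! i)])))"

definition peirce :: "('a::ab_group_add \<Rightarrow> 'a \<Rightarrow> 'a) \<Rightarrow> 'a \<Rightarrow> 'a \<Rightarrow> 'a set" where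
  "peirce mult ei ej = {mult (mult ei x) ej | x. True}"

definition Lop :: "('a \<Rightarrow> 'a \<Rightarrow> 'a) \<Rightarrow> 'a \<Rightarrow> 'a \<Rightarrow> 'a" where
  "Lop mult y = (\<lambda>x. mult y x)"

definition Rop :: "('a \<Rightarrow> 'a \<Rightarrow> 'a) \<Rightarrow> 'a \<Rightarrow> 'a \<Rightarrow> 'a" where
  "Rop mult y = (\<lambda>x. mult x y)"

definition op_comm :: "('a::ab_group_add \<Rightarrow> 'a) \<Rightarrow> ('a \<Rightarrow> 'a) \<Rightarrow> 'a \<Rightarrow> 'a" where
  "op_comm S T = (\<lambda>x. S (T x) - T (S x))"

definition f_yz :: "('a::ab_group_add \<Rightarrow> 'a \<Rightarrow> 'a) \<Rightarrow> 'a \<Rightarrow> 'a \<Rightarrow> 'a \<Rightarrow> 'a" where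
  "f_yz mult y z = (\<lambda>x. op_comm (Lop mult y) (Lop mult z) x
                      + op_comm (Lop mult y) (Rop mult z) x
                      + op_comm (Rop mult y) (Rop mult z) x)"

end

theory Submission
  imports Defs
begin


lemma ab1: "a + b + (c + d) = a + e + (f + d) \<Longrightarrow> (b - e) + (c - f) = (0::'a::ab_group_add)"
  by (simp add: algebra_simps)
lemma ab2: "a - b + (c - d) = 0 \<Longrightarrow> b = a + c - (d::'a::ab_group_add)"
  by (simp add: algebra_simps)
lemma ab3: "a - b + (c - d) = 0 \<Longrightarrow> a = b - c + (d::'a::ab_group_add)"
  by (simp add: algebra_simps)
lemma ab4: "(p - q) - (r - q) + (r - p) = (0::'a::ab_group_add)" by simp
lemma ab5: assumes "a + b = 0" "b + c = 0" "a - b + c = 0" shows "a + (a + (a + 0)) = (0::'a::ab_group_add)"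
proof -
  have b: "b = - a" using assms(1) by (metis add.commute add_eq_0_iff)
  have c: "c = a" using assms(2) unfolding b by (metis add.commute add_eq_0_iff minus_minus)
  show ?thesis using assms(3) unfolding b c by (simp add: algebra_simps)
qed

locale altr =
  fixes mult :: "'a::ab_group_add \<Rightarrow> 'a \<Rightarrow> 'a" (infixl "\<odot>" 70) and one :: 'a
  assumes ring: "unital_alternative_ring mult one"
begin

lemma distL[simp]: "x \<odot> (y + z) = x \<odot> y + x \<odot> z"
  using ring unfolding unital_alternative_ring_def by blast
lemma distR[simp]: "(x + y) \<odot> z = x \<odot> z + y \<odot> z"
  using ring unfolding unital_alternative_ring_def by blast
lemma one_l[simp]: "one \<odot> x = x"
  using ring unfolding unital_alternative_ring_def by blast
lemma one_r[simp]: "x \<odot> one = x"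
  using ring unfolding unital_alternative_ring_def by blast
lemma altL[simp]: "(x \<odot> x) \<odot> y = x \<odot> (x \<odot> y)"
  using ring unfolding unital_alternative_ring_def assoc3_def by auto
lemma altR[simp]: "(y \<odot> x) \<odot> x = y \<odot> (x \<odot> x)"
  using ring unfolding unital_alternative_ring_def assoc3_def by auto
lemma mult_0r[simp]: "x \<odot> 0 = 0"
proof -
  have "x \<odot> 0 + x \<odot> 0 = x \<odot> 0 + 0" by (metis distL add_0_right)
  thus ?thesis by (rule add_left_imp_eq)
qed
lemma mult_0l[simp]: "0 \<odot> x = 0"
proof -
  have "0 \<odot> x + 0 \<odot> x = 0 \<odot> x + 0" by (metis distR add_0_right)
  thus ?thesis by (rule add_left_imp_eq)
qed
lemma minus_r[simp]: "x \<odot> (- y) = - (x \<odot> y)"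
  proof -
  have "x \<odot> y + x \<odot> (- y) = x \<odot> (y + - y)" by (rule distL[symmetric])
  also have "\<dots> = 0" by simp
  finally show ?thesis by (rule minus_unique[symmetric])
qed
lemma minus_l[simp]: "(- x) \<odot> y = - (x \<odot> y)"
  proof -
  have "x \<odot> y + (- x) \<odot> y = (x + - x) \<odot> y" by (rule distR[symmetric])
  also have "\<dots> = 0" by simp
  finally show ?thesis by (rule minus_unique[symmetric])
qed
lemma diff_r[simp]: "x \<odot> (y - z) = x \<odot> y - x \<odot> z"
  using distL[of x y "-z"] by (simp only: diff_conv_add_uminus minus_r)
lemma diff_l[simp]: "(x - y) \<odot> z = x \<odot> z - y \<odot> z"
  using distR[of x "-y" z] by (simp only: diff_conv_add_uminus minus_l)

lemma lin1: "(x\<odot>y)\<odot>z - x\<odot>(y\<odot>z) + ((y\<odot>x)\<odot>z - y\<odot>(x\<odot>z)) = 0"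
proof -
  have "((x+y)\<odot>(x+y))\<odot>z = (x+y)\<odot>((x+y)\<odot>z)" by (rule altL)
  then have "x \<odot> (x \<odot> z) + x \<odot> y \<odot> z + (y \<odot> x \<odot> z + y \<odot> (y \<odot> z)) = x \<odot> (x \<odot> z) + x \<odot> (y \<odot> z) + (y \<odot> (x \<odot> z) + y \<odot> (y \<odot> z))"
    by (simp only: distL distR altL add_ac)
  then show ?thesis by (rule ab1)
qed
lemma lin2: "(x\<odot>y)\<odot>z - x\<odot>(y\<odot>z) + ((x\<odot>z)\<odot>y - x\<odot>(z\<odot>y)) = 0"
proof -
  have "(x\<odot>(y+z))\<odot>(y+z) = x\<odot>((y+z)\<odot>(y+z))" by (rule altR)
  then have "x \<odot> y \<odot> y + x \<odot> y \<odot> z + (x \<odot> z \<odot> y + x \<odot> z \<odot> z) = x \<odot> y \<odot> y + x \<odot> (y \<odot> z) + (x \<odot> (z \<odot> y) + x \<odot> z \<odot> z)"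
    by (simp only: distL distR altR add_ac)
  then show ?thesis by (rule ab1)
qed
lemma flex: "(x\<odot>y)\<odot>x = x\<odot>(y\<odot>x)"
  using lin2[of x y x] by simp
lemma eL: "e\<odot>(x\<odot>y) = (e\<odot>x)\<odot>y + (x\<odot>e)\<odot>y - x\<odot>(e\<odot>y)"
  using lin1[of e x y] by (rule ab2)
lemma eR: "(x\<odot>y)\<odot>e = x\<odot>(y\<odot>e) - (x\<odot>e)\<odot>y + x\<odot>(e\<odot>y)"
  using lin2[of x y e] by (rule ab3)

lemma cen_comm: "c \<in> center mult \<Longrightarrow> c \<odot> x = x \<odot> c"
  unfolding center_def lie_br_def by auto

lemma cen_assoc1:
  assumes tf3: "torsion_free 3 TYPE('a)" and c: "c \<in> center mult"
  shows "(x\<odot>y)\<odot>c = x\<odot>(y\<odot>c)"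
proof -
  define A where "A = (x\<odot>y)\<odot>c - x\<odot>(y\<odot>c)"
  define B where "B = (x\<odot>c)\<odot>y - x\<odot>(c\<odot>y)"
  define C where "C = (c\<odot>x)\<odot>y - c\<odot>(x\<odot>y)"
  have ab: "A + B = 0" using lin2[of x y c] unfolding A_def B_def .
  have bc: "B + C = 0" using lin1[of x c y] unfolding B_def C_def .
  have B': "B = (x\<odot>c)\<odot>y - x\<odot>(y\<odot>c)" unfolding B_def using cen_comm[OF c, of y] by simp
  have C': "C = (x\<odot>c)\<odot>y - (x\<odot>y)\<odot>c" unfolding C_def
    using cen_comm[OF c, of x] cen_comm[OF c, of "x\<odot>y"] by simp
  have "A - B + C = 0" unfolding B' C' A_def by (rule ab4)
  hence "A + (A + (A + 0)) = 0" using ab bc by (rule ab5[rotated 2])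
  hence "zsm 3 A = 0" by (simp add: zsm_def numeral_3_eq_3)
  hence "A = 0" using tf3 unfolding torsion_free_def by blast
  thus ?thesis unfolding A_def by simp
qed

lemma cen_assoc2:
  assumes tf3: "torsion_free 3 TYPE('a)" and c: "c \<in> center mult"
  shows "(c\<odot>x)\<odot>y = c\<odot>(x\<odot>y)" and "(x\<odot>c)\<odot>y = x\<odot>(c\<odot>y)"
proof -
  have a: "(x\<odot>y)\<odot>c = x\<odot>(y\<odot>c)" by (rule cen_assoc1[OF tf3 c])
  show b: "(x\<odot>c)\<odot>y = x\<odot>(c\<odot>y)" using lin2[of x y c] a by simp
  show "(c\<odot>x)\<odot>y = c\<odot>(x\<odot>y)" using lin1[of x c y] b by simp
qed

end

lemma sum_const_nsm: "(\<Sum>i<m. c) = nsm m (c::'a::ab_group_add)"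
  by (induction m) (simp_all add: add.commute)

lemma replicate_upd: "i < m \<Longrightarrow> (replicate m x)[i := y] = replicate i x @ y # replicate (m - Suc i) x"
proof (induction m arbitrary: i)
  case 0 then show ?case by simp
next
  case (Suc m) then show ?case by (cases i) auto
qed

lemma nsm_neg: "nsm m (- x) = - nsm m (x::'a::ab_group_add)"
  by (induction m) (simp_all add: add.commute)

locale altre = altr +
  fixes e :: "'a::ab_group_add"
  assumes idem: "e \<odot> e = e"
begin

declare idem[simp]
lemma e_eL[simp]: "e \<odot> (e \<odot> u) = e \<odot> u" by (metis altL idem)
lemma e_eR[simp]: "(u \<odot> e) \<odot> e = u \<odot> e" by (metis altR idem)
lemma e_flex[simp]: "e \<odot> (u \<odot> e) = (e \<odot> u) \<odot> e" by (rule flex[symmetric])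

definition P12 where "P12 x = (e \<odot> x) \<odot> (one - e)"

abbreviation T where "T x \<equiv> lie_br mult x e"

lemma P12_alt: "P12 x = e \<odot> x - (e \<odot> x) \<odot> e" unfolding P12_def by simp
lemma P12_add[simp]: "P12 (x + y) = P12 x + P12 y" unfolding P12_alt by simp
lemma P12_minus[simp]: "P12 (- x) = - P12 x" unfolding P12_alt by simp
lemma P12_diff[simp]: "P12 (x - y) = P12 x - P12 y" unfolding P12_alt by simp
lemma P12_0[simp]: "P12 0 = 0" unfolding P12_alt by simp

lemma P12_T: "P12 (T a) = - P12 a"
  unfolding P12_alt lie_br_def by simp

lemma P12_Tpow: "P12 ((T ^^ m) a) = (if even m then P12 a else - P12 a)"
  by (induction m) (simp_all add: P12_T)

lemma P12_sum: "P12 (\<Sum>i<(m::nat). f i) = (\<Sum>i<m. P12 (f i))"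
  by (induction m) simp_all

lemma br_neg: "lie_br mult (- a) b = - lie_br mult a b"
  unfolding lie_br_def by simp
lemma br_swap: "lie_br mult b a = - lie_br mult a b"
  unfolding lie_br_def by simp

lemma T_r: assumes "e \<odot> r = r" "r \<odot> e = 0"
  shows "(T ^^ m) r = (if even m then r else - r)"
proof (induction m)
  case 0 then show ?case by simp
next
  case (Suc m) then show ?case using assms by (simp add: lie_br_def)
qed

lemma foldl_rep: "foldl (lie_br mult) a (replicate m e) = (T ^^ m) a"
  by (induction m arbitrary: a) (simp_all add: funpow_Suc_right del: funpow.simps)

lemma lp_upd: "i < m \<Longrightarrow> lie_p mult (a # (replicate m e)[i := v])
     = (T ^^ (m - Suc i)) (lie_br mult ((T ^^ i) a) v)"
  by (simp add: replicate_upd foldl_rep)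

lemma sign_term: assumes "e \<odot> r = r" "r \<odot> e = 0" "i < m" "even m"
  shows "P12 (lie_p mult (r # (replicate m e)[i := v])) = - P12 (lie_br mult r v)"
proof (cases "even i")
  case True
  then have "odd (m - Suc i)" using assms by presburger
  then show ?thesis using True assms by (simp only: lp_upd[OF assms(3)]) (simp add: P12_Tpow T_r)
next
  case False
  then have "even (m - Suc i)" using assms by presburger
  then show ?thesis using False assms by (simp only: lp_upd[OF assms(3)]) (simp add: P12_Tpow T_r br_neg)
qed


lemma R12_eig: "r \<in> peirce mult e (one - e) \<Longrightarrow> e \<odot> r = r \<and> r \<odot> e = 0"
  unfolding peirce_def by auto

lemma lie_eq:
  assumes n2: "n \<ge> 2" and Dder: "mult_lie_n_derivation mult n D"
    and r: "r \<in> peirce mult e (one - e)"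
    and Dc12: "D ` peirce mult e (one - e) \<subseteq> peirce mult e (one - e)"
  shows "nsm (n - 1) (P12 (lie_br mult r (D e))) = 0"
proof -
  have re: "e \<odot> r = r" "r \<odot> e = 0" using R12_eig[OF r] by auto
  have Dr: "e \<odot> D r = D r" "D r \<odot> e = 0" using R12_eig[of "D r"] Dc12 r by auto
  define X where "X = P12 (lie_br mult r (D e))"
  have der: "\<And>xs. length xs = n \<Longrightarrow> D (lie_p mult xs) = (\<Sum>i<n. lie_p mult (xs[i := D (xs ! i)]))"
    using Dder unfolding mult_lie_n_derivation_def by blast
  consider (odd) m where "n = Suc m" "even m" | (even) m where "n = Suc (Suc m)" "even m"
  proof (cases "even n")
    case True
    then have "n = Suc (Suc (n - 2))" "even (n - 2)" using n2 by auto
    then show ?thesis using that by blast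
  next
    case False
    then have "n = Suc (n - 1)" "even (n - 1)" using n2 by auto
    then show ?thesis using that by blast
  qed
  then show ?thesis
  proof cases
    case odd
    define xs where "xs = r # replicate m e"
    have len: "length xs = n" unfolding xs_def odd by simp
    have lp: "lie_p mult xs = r" unfolding xs_def using re odd by (simp add: foldl_rep T_r)
    have s1: "(\<Sum>i<n. lie_p mult (xs[i := D (xs ! i)]))
        = lie_p mult (D r # replicate m e) + (\<Sum>i<m. lie_p mult (r # (replicate m e)[i := D e]))"
      unfolding odd(1) sum.lessThan_Suc_shift xs_def by simp
    have lp2: "lie_p mult (D r # replicate m e) = D r" using Dr odd by (simp add: foldl_rep T_r)
    have "D r = D r + (\<Sum>i<m. lie_p mult (r # (replicate m e)[i := D e]))"
      using der[OF len] lp s1 lp2 by simp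
    then have "P12 (D r) = P12 (D r) + (\<Sum>i<m. P12 (lie_p mult (r # (replicate m e)[i := D e])))"
      by (metis P12_add P12_sum)
    also have "(\<Sum>i<m. P12 (lie_p mult (r # (replicate m e)[i := D e]))) = (\<Sum>i<m. - X)"
      unfolding X_def using re odd by (intro sum.cong refl sign_term) auto
    finally have "nsm m (- X) = 0" by (simp add: sum_const_nsm)
    then show ?thesis unfolding X_def[symmetric] odd(1) by (simp add: nsm_neg)
  next
    case even
    define xs where "xs = e # r # replicate m e"
    have len: "length xs = n" unfolding xs_def even by simp
    have ber: "lie_br mult e r = r" using re unfolding lie_br_def by simp
    have lp: "lie_p mult xs = r" unfolding xs_def using re even ber by (simp add: foldl_rep T_r)
    have s1: "(\<Sum>i<n. lie_p mult (xs[i := D (xs ! i)]))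
        = lie_p mult (D e # r # replicate m e) + (lie_p mult (e # D r # replicate m e)
           + (\<Sum>i<m. lie_p mult (r # (replicate m e)[i := D e])))"
      unfolding even(1) sum.lessThan_Suc_shift xs_def using ber by simp
    have lp2: "lie_p mult (e # D r # replicate m e) = D r"
    proof -
      have "lie_br mult e (D r) = D r" using Dr unfolding lie_br_def by simp
      then show ?thesis using Dr even by (simp add: foldl_rep T_r)
    qed
    have lp3: "P12 (lie_p mult (D e # r # replicate m e)) = - X"
      unfolding X_def using even by (simp add: foldl_rep P12_Tpow br_swap[of "D e" r])
    have "D r = lie_p mult (D e # r # replicate m e) + (D r + (\<Sum>i<m. lie_p mult (r # (replicate m e)[i := D e])))"
      using der[OF len] lp s1 lp2 by simp
    then have "P12 (D r) = - X + (P12 (D r) + (\<Sum>i<m. P12 (lie_p mult (r # (replicate m e)[i := D e]))))"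
      by (metis P12_add P12_sum lp3)
    also have "(\<Sum>i<m. P12 (lie_p mult (r # (replicate m e)[i := D e]))) = (\<Sum>i<m. - X)"
      unfolding X_def using re even by (intro sum.cong refl sign_term) auto
    finally have G0: "- nsm m X = X" by (simp add: sum_const_nsm nsm_neg)
    then have G: "- X = nsm m X" by (metis minus_minus)
    have "X + nsm m X = 0" by (simp add: G[symmetric])
    then show ?thesis unfolding X_def[symmetric] even(1) by simp
  qed
qed


lemma P12_via: "P12 (x \<odot> y) = e \<odot> (x \<odot> y) - (e \<odot> (x \<odot> y)) \<odot> e"
  by (rule P12_alt)

lemma c11: assumes "e\<odot>x = x" "x\<odot>e = x" "e\<odot>y = y" "y\<odot>e = 0" shows "P12 (x\<odot>y) = x\<odot>y"
  unfolding P12_via using eL[of e x y] eR[of x y e] assms by simp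
lemma c12: assumes "e\<odot>x = x" "x\<odot>e = 0" "e\<odot>y = y" "y\<odot>e = 0" shows "P12 (x\<odot>y) = 0"
  unfolding P12_via using eL[of e x y] eR[of x y e] assms by simp
lemma c21: assumes "e\<odot>x = 0" "x\<odot>e = x" "e\<odot>y = y" "y\<odot>e = 0" shows "P12 (x\<odot>y) = 0"
  unfolding P12_via using eL[of e x y] eR[of x y e] assms by simp
lemma c22: assumes "e\<odot>x = 0" "x\<odot>e = 0" "e\<odot>y = y" "y\<odot>e = 0" shows "P12 (x\<odot>y) = 0"
  unfolding P12_via using eL[of e x y] eR[of x y e] assms by simp
lemma r11: assumes "e\<odot>x = x" "x\<odot>e = 0" "e\<odot>y = y" "y\<odot>e = y" shows "P12 (x\<odot>y) = 0"
  unfolding P12_via using eL[of e x y] eR[of x y e] assms by simp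
lemma r21: assumes "e\<odot>x = x" "x\<odot>e = 0" "e\<odot>y = 0" "y\<odot>e = y" shows "P12 (x\<odot>y) = 0"
  unfolding P12_via using eL[of e x y] eR[of x y e] assms by simp
lemma r22: assumes "e\<odot>x = x" "x\<odot>e = 0" "e\<odot>y = 0" "y\<odot>e = 0" shows "P12 (x\<odot>y) = x\<odot>y"
  unfolding P12_via using eL[of e x y] eR[of x y e] assms by simp

lemma decomp: "d = (e\<odot>d)\<odot>e + (e\<odot>d - (e\<odot>d)\<odot>e) + (d\<odot>e - (e\<odot>d)\<odot>e) + (d - e\<odot>d - d\<odot>e + (e\<odot>d)\<odot>e)"
  by (simp add: algebra_simps)

lemma Pdr: assumes "e\<odot>r = r" "r\<odot>e = 0" shows "P12 (d\<odot>r) = ((e\<odot>d)\<odot>e)\<odot>r"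
proof -
  have "P12 (d\<odot>r) = P12 (((e\<odot>d)\<odot>e + (e\<odot>d - (e\<odot>d)\<odot>e) + (d\<odot>e - (e\<odot>d)\<odot>e) + (d - e\<odot>d - d\<odot>e + (e\<odot>d)\<odot>e))\<odot>r)"
    by (subst decomp[of d]) (rule refl)
  also have "\<dots> = P12 (((e\<odot>d)\<odot>e)\<odot>r) + P12 ((e\<odot>d - (e\<odot>d)\<odot>e)\<odot>r) + P12 ((d\<odot>e - (e\<odot>d)\<odot>e)\<odot>r) + P12 ((d - e\<odot>d - d\<odot>e + (e\<odot>d)\<odot>e)\<odot>r)"
    by (simp only: distR P12_add)
  also have "\<dots> = ((e\<odot>d)\<odot>e)\<odot>r + 0 + 0 + 0"
    by (intro arg_cong2[where f="(+)"] c11 c12 c21 c22 assms) simp_all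
  finally show ?thesis by simp
qed

lemma Prd: assumes "e\<odot>r = r" "r\<odot>e = 0" shows "P12 (r\<odot>d) = r\<odot>(d - e\<odot>d - d\<odot>e + (e\<odot>d)\<odot>e)"
proof -
  have "P12 (r\<odot>d) = P12 (r\<odot>((e\<odot>d)\<odot>e + (e\<odot>d - (e\<odot>d)\<odot>e) + (d\<odot>e - (e\<odot>d)\<odot>e) + (d - e\<odot>d - d\<odot>e + (e\<odot>d)\<odot>e)))"
    by (subst decomp[of d]) (rule refl)
  also have "\<dots> = P12 (r\<odot>((e\<odot>d)\<odot>e)) + P12 (r\<odot>(e\<odot>d - (e\<odot>d)\<odot>e)) + P12 (r\<odot>(d\<odot>e - (e\<odot>d)\<odot>e)) + P12 (r\<odot>(d - e\<odot>d - d\<odot>e + (e\<odot>d)\<odot>e))"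
    by (simp only: distL P12_add)
  also have "\<dots> = 0 + 0 + 0 + r\<odot>(d - e\<odot>d - d\<odot>e + (e\<odot>d)\<odot>e)"
    by (intro arg_cong2[where f="(+)"] r11 c12 r21 r22 assms) (simp_all add: algebra_simps)
  finally show ?thesis by simp
qed


lemma final:
  assumes tf3: "torsion_free 3 TYPE('a)"
    and tfn1: "torsion_free (int n - 1) TYPE('a)"
    and n2: "n \<ge> 2" and Dder: "mult_lie_n_derivation mult n D"
    and c2: "\<And>x. x \<in> peirce mult e e \<Longrightarrow>
               (\<forall>r\<in>peirce mult e (one - e). x \<odot> r = 0) \<or> (\<forall>r\<in>peirce mult (one - e) e. r \<odot> x = 0) \<Longrightarrow> x = 0"
    and Da: "\<And>x. x \<in> peirce mult e e \<Longrightarrow>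
               ((one - e) \<odot> D x) \<odot> (one - e) \<in> {z \<odot> (one - e) | z. z \<in> center mult}"
    and Dc12: "D ` peirce mult e (one - e) \<subseteq> peirce mult e (one - e)"
  shows "D e - f_yz mult ((e \<odot> D e) \<odot> (one - e) + ((one - e) \<odot> D e) \<odot> e) e e \<in> center mult"
proof -
  define d where "d = D e"
  have ee: "e \<in> peirce mult e e" unfolding peirce_def by (intro CollectI exI[of _ e]) simp
  obtain z where z: "z \<in> center mult" and dz: "((one - e) \<odot> d) \<odot> (one - e) = z \<odot> (one - e)"
    using Da[OF ee] unfolding d_def by blast
  have d22: "d - e\<odot>d - d\<odot>e + (e\<odot>d)\<odot>e = z - z\<odot>e" using dz by (simp add: algebra_simps)
  have key: "\<forall>r\<in>peirce mult e (one - e). ((e\<odot>d)\<odot>e - z\<odot>e) \<odot> r = 0"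
  proof
    fix r assume r: "r \<in> peirce mult e (one - e)"
    have re: "e \<odot> r = r" "r \<odot> e = 0" using R12_eig[OF r] by auto
    have "nsm (n - 1) (P12 (lie_br mult r d)) = 0" unfolding d_def by (rule lie_eq[OF n2 Dder r Dc12])
    moreover have "nat (int n - 1) = n - 1" "0 \<le> int n - 1" using n2 by auto
    ultimately have "zsm (int n - 1) (P12 (lie_br mult r d)) = 0" unfolding zsm_def by simp
    hence "P12 (lie_br mult r d) = 0" using tfn1 unfolding torsion_free_def by blast
    hence "P12 (r \<odot> d) - P12 (d \<odot> r) = 0" unfolding lie_br_def by simp
    hence h: "r \<odot> (z - z\<odot>e) = ((e\<odot>d)\<odot>e) \<odot> r" unfolding Pdr[OF re] Prd[OF re] d22 by simp
    have "r \<odot> (z \<odot> e) = (r \<odot> z) \<odot> e" using cen_assoc2(2)[OF tf3 z, of r e] by simp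
    also have "\<dots> = (z \<odot> r) \<odot> e" using cen_comm[OF z, of r] by simp
    also have "\<dots> = 0" using cen_assoc2(1)[OF tf3 z, of r e] re by simp
    finally have h2: "r \<odot> (z \<odot> e) = 0" .
    have h3: "(z \<odot> e) \<odot> r = z \<odot> r" using cen_assoc2(1)[OF tf3 z, of e r] re by simp
    show "((e\<odot>d)\<odot>e - z\<odot>e) \<odot> r = 0"
      using h h2 h3 cen_comm[OF z, of r] by simp
  qed
  have mem: "(e\<odot>d)\<odot>e - z\<odot>e \<in> peirce mult e e"
    unfolding peirce_def
  proof (intro CollectI exI[of _ "d - z"] conjI TrueI)
    show "(e\<odot>d)\<odot>e - z\<odot>e = (e \<odot> (d - z)) \<odot> e" using cen_comm[OF z, of e, symmetric] by simp
  qed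
  have d11: "(e\<odot>d)\<odot>e = z\<odot>e" using c2[OF mem] key by simp
  have "D e - f_yz mult ((e \<odot> D e) \<odot> (one - e) + ((one - e) \<odot> D e) \<odot> e) e e = z"
    unfolding d_def[symmetric] f_yz_def op_comm_def Lop_def Rop_def
    using d11 d22 cen_comm[OF z, of e, symmetric] by (simp add: algebra_simps)
  then show ?thesis using z by simp
qed

end

theorem lemma3p5:
  fixes mult :: "'a::ab_group_add \<Rightarrow> 'a \<Rightarrow> 'a"
    and one e1 e2 :: 'a
    and n :: nat
    and D :: "'a \<Rightarrow> 'a"
  assumes n2: "n \<ge> 2"
    and ring: "unital_alternative_ring mult one"
    and tf2: "torsion_free 2 TYPE('a)"
    and tf3: "torsion_free 3 TYPE('a)"
    and tfn1: "torsion_free (int n - 1) TYPE('a)"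
    and tfn3: "torsion_free (int n - 3) TYPE('a)"
    and idem: "mult e1 e1 = e1" and e1_nz: "e1 \<noteq> 0" and e1_n1: "e1 \<noteq> one"
    and e2_def: "e2 = one - e1"
    and c1a: "\<And>x. x \<in> peirce mult e1 e2 \<Longrightarrow> (\<forall>r\<in>peirce mult e2 e1. mult x r = 0) \<Longrightarrow> x = 0"
    and c1b: "\<And>x. x \<in> peirce mult e2 e1 \<Longrightarrow> (\<forall>r\<in>peirce mult e1 e2. mult x r = 0) \<Longrightarrow> x = 0"
    and c2: "\<And>x. x \<in> peirce mult e1 e1 \<Longrightarrow>
               (\<forall>r\<in>peirce mult e1 e2. mult x r = 0) \<or> (\<forall>r\<in>peirce mult e2 e1. mult r x = 0) \<Longrightarrow> x = 0"
    and c3: "\<And>x. x \<in> peirce mult e2 e2 \<Longrightarrow>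
               (\<forall>r\<in>peirce mult e1 e2. mult r x = 0) \<or> (\<forall>r\<in>peirce mult e2 e1. mult x r = 0) \<Longrightarrow> x = 0"
    and c4: "\<And>z. z \<in> center mult \<Longrightarrow> z \<noteq> 0 \<Longrightarrow> {mult z r | r. True} = UNIV"
    and Dder: "mult_lie_n_derivation mult n D"
    and Da: "\<And>x. x \<in> peirce mult e1 e1 \<Longrightarrow>
               mult (mult e2 (D x)) e2 \<in> {mult z e2 | z. z \<in> center mult}"
    and Db: "\<And>x. x \<in> peirce mult e2 e2 \<Longrightarrow>
               mult (mult e1 (D x)) e1 \<in> {mult z e1 | z. z \<in> center mult}"
    and Dc12: "D ` peirce mult e1 e2 \<subseteq> peirce mult e1 e2"
    and Dc21: "D ` peirce mult e2 e1 \<subseteq> peirce mult e2 e1"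
  shows "D e1 - f_yz mult (mult (mult e1 (D e1)) e2 + mult (mult e2 (D e1)) e1) e1 e1
           \<in> center mult"
  proof -
  interpret altre mult one e1
    by unfold_locales (rule ring, rule idem)
  show ?thesis unfolding e2_def
    by (rule final[OF tf3 tfn1 n2 Dder c2[unfolded e2_def] Da[unfolded e2_def] Dc12[unfolded e2_def]])
qed

end
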